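(* Let $n\ge1$, let $X=\{x_1,\dots,x_n\}$, and let $$W=\{x_ix_jx_k,\ x_ix_kx_j,\ x_ix_jx_ix_k : i>j>k\}\cup\{x_ix_jx_j,\ x_ix_ix_j : i>j\}\subseteq X^*.$$ Let $Q_W$ be the Ufnarovskiĭ graph of $W$ and $W^{(i)}$ the set of $i$-chains, as described in the context. Then: (a) $|W^{(\frac{n(n+1)}2-1)}|=1$, and the unique element of $W^{(\frac{n(n+1)}2-1)}$ has maximal degree among all Anick chains. (b) $W^{(m)}=\emptyset$ for all $m\ge\frac{n(n+1)}2$. (c) $Q_W$ is a finite quiver without oriented cycles. (d) Each $W^{(i)}$ is a finite set.
   Context: $X^*$ is the free monoid on $X$, with empty word $1$. $W$ is the set of leading words of the Gröbner–Shirshov basis of the Chinese algebra of rank $n$, with respect to the length-lexicographic order with $x_n>\dots>x_1$; it is given explicitly in the statement. The Ufnarovskiĭ graph $Q_W$: - Its vertex set is $\{1\}\cup X\cup\{u: u$ is a nonempty proper right factor (suffix) of some element of $W\}$. - It has arrows $1\to x_i$ for each $i$. - It has arrows $u\to v$ between nonempty words whenever the word $uv$ contains some element of $W$ as a factor, but no proper left factor (prefix) of $uv$ does. Chains: - For $i\ge0$, an $i$-chain (Anick chain) is a sequence $(v_1,\dots,v_{i+1})$ of nonempty words such that $1\to v_1\to\cdots\to v_{i+1}$ is a path in $Q_W$. $W^{(i)}$ is the set of $i$-chains, and $W^{(-1)}$ consists of the single empty chain. - The degree of a chain $(v_1,\dots,v_{i+1})$ is the length of the word $v_1\cdots v_{i+1}$;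 its weight is $i+1$. *)

theory Defs
  imports Main "HOL-Library.Sublist"
begin

text \<open>Letters x_1,...,x_n are encoded as the natural numbers 1..n; words in X^* are
  lists of naturals, the empty word 1 is the empty list.\<close>

definition alphabet :: "nat \<Rightarrow> nat set" where
  "alphabet n = {1..n}"

text \<open>Leading words of the Groebner--Shirshov basis of the Chinese algebra of rank n.\<close>
definition chineseW :: "nat \<Rightarrow> nat list set" where
  "chineseW n =
     {[i, j, k] | i j k. i \<le> n \<and> i > j \<and> j > k \<and> k \<ge> 1}
   \<union> {[i, k, j] | i j k. i \<le> n \<and> i > j \<and> j > k \<and> k \<ge> 1}
   \<union> {[i, j, i, k] | i j k. i \<le> n \<and> i > j \<and> j > k \<and> k \<ge> 1}
   \<union> {[i, j, j] | i j. i \<le> n \<and> i > j \<and> j \<ge> 1}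
   \<union> {[i, i, j] | i j. i \<le> n \<and> i > j \<and> j \<ge> 1}"

definition contains_factor :: "nat list set \<Rightarrow> nat list \<Rightarrow> bool" where
  "contains_factor W w \<longleftrightarrow> (\<exists>u\<in>W. sublist u w)"

definition uf_vertices :: "nat list set \<Rightarrow> nat set \<Rightarrow> nat list set" where
  "uf_vertices W X = {[]} \<union> {[x] | x. x \<in> X}
      \<union> {u. u \<noteq> [] \<and> (\<exists>w\<in>W. strict_suffix u w)}"

definition uf_arrows :: "nat list set \<Rightarrow> nat set \<Rightarrow> (nat list \<times> nat list) set" where
  "uf_arrows W X =
     {([], [x]) | x. x \<in> X}
   \<union> {(u, v) | u v. u \<in> uf_vertices W X \<and> v \<in> uf_vertices W X \<and> u \<noteq> [] \<and> v \<noteq> []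
        \<and> contains_factor W (u @ v)
        \<and> \<not> (\<exists>p. strict_prefix p (u @ v) \<and> contains_factor W p)}"

definition chains :: "nat list set \<Rightarrow> nat set \<Rightarrow> nat \<Rightarrow> nat list list set" where
  "chains W X i = {vs. length vs = i + 1 \<and> (\<forall>v\<in>set vs. v \<noteq> [])
      \<and> ([], vs ! 0) \<in> uf_arrows W X
      \<and> (\<forall>k<i. (vs ! k, vs ! Suc k) \<in> uf_arrows W X)}"

definition chain_degree :: "nat list list \<Rightarrow> nat" where
  "chain_degree vs = length (concat vs)"

end

theory Submission
  imports Defs
begin


fun inW :: "nat \<Rightarrow> nat list \<Rightarrow> bool" where
  "inW n [i,j,k] = (i \<le> n \<and> k \<ge> 1 \<and> j \<ge> 1 \<and> ((i>j \<and> j>k) \<or> (i>k \<and> k>j) \<or> (i>j \<and> j=k) \<or> (i=j \<and> j>k)))"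
| "inW n [i,j,i',k] = (i'=i \<and> i \<le> n \<and> i>j \<and> j>k \<and> k\<ge>1)"
| "inW n _ = False"

fun cfr :: "nat \<Rightarrow> nat list \<Rightarrow> bool" where
  "cfr n [] = False"
| "cfr n (y#ys) = (inW n (take 3 (y#ys)) \<or> inW n (take 4 (y#ys)) \<or> cfr n ys)"

fun isV :: "nat \<Rightarrow> nat list \<Rightarrow> bool" where
  "isV n [a] = (1 \<le> a \<and> a \<le> n)"
| "isV n [a,b] = (b \<ge> 1 \<and> a \<le> n \<and> (b < a \<or> (a < b \<and> b < n) \<or> (a = b \<and> a < n)))"
| "isV n [b,a,c] = (1 \<le> c \<and> c < b \<and> b < a \<and> a \<le> n)"
| "isV n _ = False"

fun key :: "nat list \<Rightarrow> nat \<times> nat" where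
  "key [a] = (a,a)" | "key [a,b] = (if b < a then (a,b) else (b,b))" | "key [b,a,c] = (a,c)" | "key _ = (0,0)"

definition nxt :: "nat list \<Rightarrow> nat list" where
  "nxt u = (case key u of (a,b) \<Rightarrow> if a = b then [a, a-1] else if b > 1 then [a, b-1] else [a-1])"

definition lexl :: "nat \<times> nat \<Rightarrow> nat \<times> nat \<Rightarrow> bool" where
  "lexl k k' = (fst k < fst k' \<or> (fst k = fst k' \<and> snd k < snd k'))"

definition tight :: "nat \<times> nat \<Rightarrow> nat \<times> nat \<Rightarrow> bool" where
  "tight k k' = ((fst k = fst k' \<and> snd k + 1 = snd k') \<or> (fst k + 1 = fst k' \<and> snd k = fst k \<and> snd k' = 1))"

definition degc :: "nat list \<Rightarrow> nat list \<Rightarrow> bool" where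
  "degc u v = ((fst (key v) = fst (key u) \<and> 2 * snd (key v) + length v \<le> 2 * snd (key u))
     \<or> (fst (key v) < fst (key u) \<and> 2 * snd (key v) + length v + 1 \<le> 2 * fst (key v) + 2 * snd (key u)))"

lemma A_1_1:
  assumes "isV n [u0]" "isV n [v0]" "cfr n ([u0]@[v0])" "\<not> cfr n (butlast ([u0]@[v0]))"
  shows "lexl (key [v0]) (key [u0]) \<and> degc [u0] [v0] \<and> (tight (key [v0]) (key [u0]) \<longrightarrow> [v0] = nxt [u0])"
  using assms
  by (simp add: lexl_def tight_def degc_def nxt_def; arith)

lemma A_1_2:
  assumes "isV n [u0]" "isV n [v0,v1]" "cfr n ([u0]@[v0,v1])" "\<not> cfr n (butlast ([u0]@[v0,v1]))"
  shows "lexl (key [v0,v1]) (key [u0]) \<and> degc [u0] [v0,v1] \<and> (tight (key [v0,v1]) (key [u0]) \<longrightarrow> [v0,v1] = nxt [u0])"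
  using assms
  by (simp add: lexl_def tight_def degc_def nxt_def; arith)

lemma A_1_3:
  assumes "isV n [u0]" "isV n [v0,v1,v2]" "cfr n ([u0]@[v0,v1,v2])" "\<not> cfr n (butlast ([u0]@[v0,v1,v2]))"
  shows "lexl (key [v0,v1,v2]) (key [u0]) \<and> degc [u0] [v0,v1,v2] \<and> (tight (key [v0,v1,v2]) (key [u0]) \<longrightarrow> [v0,v1,v2] = nxt [u0])"
  using assms
  by (simp add: lexl_def tight_def degc_def nxt_def; arith)

lemma A_2_1:
  assumes "isV n [u0,u1]" "isV n [v0]" "cfr n ([u0,u1]@[v0])" "\<not> cfr n (butlast ([u0,u1]@[v0]))"
  shows "lexl (key [v0]) (key [u0,u1]) \<and> degc [u0,u1] [v0] \<and> (tight (key [v0]) (key [u0,u1]) \<longrightarrow> [v0] = nxt [u0,u1])"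
  using assms
  by (simp add: lexl_def tight_def degc_def nxt_def; arith)

lemma A_2_2:
  assumes "isV n [u0,u1]" "isV n [v0,v1]" "cfr n ([u0,u1]@[v0,v1])" "\<not> cfr n (butlast ([u0,u1]@[v0,v1]))"
  shows "lexl (key [v0,v1]) (key [u0,u1]) \<and> degc [u0,u1] [v0,v1] \<and> (tight (key [v0,v1]) (key [u0,u1]) \<longrightarrow> [v0,v1] = nxt [u0,u1])"
  using assms
  by (simp add: lexl_def tight_def degc_def nxt_def; arith)

lemma A_2_3:
  assumes "isV n [u0,u1]" "isV n [v0,v1,v2]" "cfr n ([u0,u1]@[v0,v1,v2])" "\<not> cfr n (butlast ([u0,u1]@[v0,v1,v2]))"
  shows "lexl (key [v0,v1,v2]) (key [u0,u1]) \<and> degc [u0,u1] [v0,v1,v2] \<and> (tight (key [v0,v1,v2]) (key [u0,u1]) \<longrightarrow> [v0,v1,v2] = nxt [u0,u1])"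
  using assms
  by (simp add: lexl_def tight_def degc_def nxt_def; arith)

lemma A_3_1:
  assumes "isV n [u0,u1,u2]" "isV n [v0]" "cfr n ([u0,u1,u2]@[v0])" "\<not> cfr n (butlast ([u0,u1,u2]@[v0]))"
  shows "lexl (key [v0]) (key [u0,u1,u2]) \<and> degc [u0,u1,u2] [v0] \<and> (tight (key [v0]) (key [u0,u1,u2]) \<longrightarrow> [v0] = nxt [u0,u1,u2])"
  using assms
  by (simp add: lexl_def tight_def degc_def nxt_def; arith)

lemma A_3_2:
  assumes "isV n [u0,u1,u2]" "isV n [v0,v1]" "cfr n ([u0,u1,u2]@[v0,v1])" "\<not> cfr n (butlast ([u0,u1,u2]@[v0,v1]))"
  shows "lexl (key [v0,v1]) (key [u0,u1,u2]) \<and> degc [u0,u1,u2] [v0,v1] \<and> (tight (key [v0,v1]) (key [u0,u1,u2]) \<longrightarrow> [v0,v1] = nxt [u0,u1,u2])"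
  using assms
  by (simp add: lexl_def tight_def degc_def nxt_def; arith)

lemma A_3_3:
  assumes "isV n [u0,u1,u2]" "isV n [v0,v1,v2]" "cfr n ([u0,u1,u2]@[v0,v1,v2])" "\<not> cfr n (butlast ([u0,u1,u2]@[v0,v1,v2]))"
  shows "lexl (key [v0,v1,v2]) (key [u0,u1,u2]) \<and> degc [u0,u1,u2] [v0,v1,v2] \<and> (tight (key [v0,v1,v2]) (key [u0,u1,u2]) \<longrightarrow> [v0,v1,v2] = nxt [u0,u1,u2])"
  using assms
  by (simp add: lexl_def tight_def degc_def nxt_def; arith)



lemma inW_len: "inW n u \<Longrightarrow> length u = 3 \<or> length u = 4"
  by (induction n u rule: inW.induct) auto

lemma inW_iff: "w \<in> chineseW n \<longleftrightarrow> inW n w"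
proof
  assume "w \<in> chineseW n" then show "inW n w" unfolding chineseW_def by auto
next
  assume "inW n w" then show "w \<in> chineseW n"
    unfolding chineseW_def
    by (induction n w rule: inW.induct) auto
qed

lemma pre_iff: "(\<exists>u\<in>chineseW n. prefix u w) \<longleftrightarrow> inW n (take 3 w) \<or> inW n (take 4 w)"
proof
  assume "\<exists>u\<in>chineseW n. prefix u w"
  then obtain u where u: "inW n u" "prefix u w" by (auto simp: inW_iff)
  then have "u = take (length u) w" by (metis append_eq_conv_conj prefix_def)
  with u inW_len[OF u(1)] show "inW n (take 3 w) \<or> inW n (take 4 w)" by auto
next
  assume "inW n (take 3 w) \<or> inW n (take 4 w)"
  then show "\<exists>u\<in>chineseW n. prefix u w" by (meson inW_iff take_is_prefix)
qed

lemma cf_iff: "contains_factor (chineseW n) w \<longleftrightarrow> cfr n w"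
proof (induction w)
  case Nil
  then show ?case by (auto simp: contains_factor_def inW_iff dest: inW_len)
next
  case (Cons y ys)
  have "contains_factor (chineseW n) (y#ys) \<longleftrightarrow> (\<exists>u\<in>chineseW n. prefix u (y#ys)) \<or> contains_factor (chineseW n) ys"
    unfolding contains_factor_def sublist_Cons_right by blast
  then show ?case using Cons pre_iff by simp
qed

lemma cf_mono: "contains_factor W p \<Longrightarrow> prefix p q \<Longrightarrow> contains_factor W q"
  unfolding contains_factor_def by (meson prefix_imp_sublist sublist_order.order.trans)

lemma minpre: assumes "w \<noteq> []"
  shows "(\<exists>p. strict_prefix p w \<and> contains_factor W p) \<longleftrightarrow> contains_factor W (butlast w)"
proof
  assume "\<exists>p. strict_prefix p w \<and> contains_factor W p"
  then obtain p where p: "strict_prefix p w" "contains_factor W p" by blast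
  then obtain z where z: "w = p @ z" "z \<noteq> []" by (auto simp: strict_prefix_def prefix_def)
  then have "butlast w = p @ butlast z" by (simp add: butlast_append)
  then show "contains_factor W (butlast w)" using p(2) cf_mono by (metis prefixI)
next
  assume "contains_factor W (butlast w)"
  moreover have "strict_prefix (butlast w) w" using assms
    by (metis append_butlast_last_id append_self_conv not_Cons_self2 prefixI strict_prefixI)
  ultimately show "\<exists>p. strict_prefix p w \<and> contains_factor W p" by blast
qed

lemma suffix_Cons_iff: "suffix u (x#xs) \<longleftrightarrow> u = x#xs \<or> suffix u xs"
  by (auto simp: suffix_def Cons_eq_append_conv)

lemma ssuf_Cons: "strict_suffix u (x#xs) \<longleftrightarrow> suffix u xs"
  by (auto simp: strict_suffix_def suffix_Cons_iff dest: suffix_length_le)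

lemma suffix_Nil_iff: "suffix u [] \<longleftrightarrow> u = []"
  by (auto simp: suffix_def)

lemma vert_isV: assumes "u \<in> uf_vertices (chineseW n) (alphabet n)" "u \<noteq> []"
  shows "isV n u"
proof -
  consider (a) x where "u = [x]" "x \<in> {1..n}" | (b) w where "inW n w" "strict_suffix u w"
    using assms by (auto simp: uf_vertices_def alphabet_def inW_iff)
  then show ?thesis
  proof cases
    case a then show ?thesis by simp
  next
    case b
    then show ?thesis using assms(2)
      by (induction n w rule: inW.induct) (auto simp: ssuf_Cons suffix_Cons_iff suffix_Nil_iff)
  qed
qed

lemma isV_len: "isV n u \<Longrightarrow> length u = 1 \<or> length u = 2 \<or> length u = 3"
  by (induction n u rule: isV.induct) auto

lemma arrowA_gen:
  assumes "isV n u" "isV n v" "cfr n (u@v)" "\<not> cfr n (butlast (u@v))"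
  shows "lexl (key v) (key u) \<and> degc u v \<and> (tight (key v) (key u) \<longrightarrow> v = nxt u)"
proof -
  have L: "length xs = 1 \<or> length xs = 2 \<or> length xs = 3 \<Longrightarrow> (\<exists>a. xs = [a]) \<or> (\<exists>a b. xs = [a,b]) \<or> (\<exists>a b c. xs = [a,b,c])" for xs :: "nat list"
    by (cases xs; cases "tl xs"; cases "tl (tl xs)") auto
  have lu: "(\<exists>a. u = [a]) \<or> (\<exists>a b. u = [a,b]) \<or> (\<exists>a b c. u = [a,b,c])" using L isV_len assms(1) by blast
  have lv: "(\<exists>a. v = [a]) \<or> (\<exists>a b. v = [a,b]) \<or> (\<exists>a b c. v = [a,b,c])" using L isV_len assms(2) by blast
  from lu lv show ?thesis
  proof (elim disjE exE)
    fix x0 y0 assume u: "u = [x0]" and v: "v = [y0]"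
    show ?thesis unfolding u v by (rule A_1_1[OF assms[unfolded u v]])
  next
    fix x0 y0 y1 assume u: "u = [x0]" and v: "v = [y0,y1]"
    show ?thesis unfolding u v by (rule A_1_2[OF assms[unfolded u v]])
  next
    fix x0 y0 y1 y2 assume u: "u = [x0]" and v: "v = [y0,y1,y2]"
    show ?thesis unfolding u v by (rule A_1_3[OF assms[unfolded u v]])
  next
    fix x0 x1 y0 assume u: "u = [x0,x1]" and v: "v = [y0]"
    show ?thesis unfolding u v by (rule A_2_1[OF assms[unfolded u v]])
  next
    fix x0 x1 y0 y1 assume u: "u = [x0,x1]" and v: "v = [y0,y1]"
    show ?thesis unfolding u v by (rule A_2_2[OF assms[unfolded u v]])
  next
    fix x0 x1 y0 y1 y2 assume u: "u = [x0,x1]" and v: "v = [y0,y1,y2]"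
    show ?thesis unfolding u v by (rule A_2_3[OF assms[unfolded u v]])
  next
    fix x0 x1 x2 y0 assume u: "u = [x0,x1,x2]" and v: "v = [y0]"
    show ?thesis unfolding u v by (rule A_3_1[OF assms[unfolded u v]])
  next
    fix x0 x1 x2 y0 y1 assume u: "u = [x0,x1,x2]" and v: "v = [y0,y1]"
    show ?thesis unfolding u v by (rule A_3_2[OF assms[unfolded u v]])
  next
    fix x0 x1 x2 y0 y1 y2 assume u: "u = [x0,x1,x2]" and v: "v = [y0,y1,y2]"
    show ?thesis unfolding u v by (rule A_3_3[OF assms[unfolded u v]])
  qed
qed

lemma arrow_from_nonempty:
  assumes "(u,v) \<in> uf_arrows (chineseW n) (alphabet n)" "u \<noteq> []"
  shows "isV n u \<and> isV n v \<and> lexl (key v) (key u) \<and> degc u v \<and> (tight (key v) (key u) \<longrightarrow> v = nxt u)"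
proof -
  have h: "u \<in> uf_vertices (chineseW n) (alphabet n)" "v \<in> uf_vertices (chineseW n) (alphabet n)"
     "v \<noteq> []" "contains_factor (chineseW n) (u@v)"
     "\<not> (\<exists>p. strict_prefix p (u @ v) \<and> contains_factor (chineseW n) p)"
    using assms by (auto simp: uf_arrows_def)
  have "isV n u" "isV n v" using h vert_isV assms(2) by auto
  moreover have "\<not> contains_factor (chineseW n) (butlast (u@v))"
    using h(5) minpre[of "u@v" "chineseW n"] assms(2) by auto
  moreover have "cfr n (u@v)" using h(4) by (simp add: cf_iff)
  ultimately have "isV n u" "isV n v" "cfr n (u@v)" "\<not> cfr n (butlast (u@v))"
    by (auto simp: cf_iff)
  then show ?thesis using arrowA_gen by blast
qed

lemma arrow_from_empty:
  assumes "([],v) \<in> uf_arrows W (alphabet n)"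
  shows "\<exists>a. v = [a] \<and> 1 \<le> a \<and> a \<le> n"
  using assms by (auto simp: uf_arrows_def alphabet_def)

lemma arrow_target: "(u,v) \<in> uf_arrows W X \<Longrightarrow> v \<in> uf_vertices W X"
  by (auto simp: uf_arrows_def uf_vertices_def)

lemma arrow_source: "(u,v) \<in> uf_arrows W X \<Longrightarrow> u \<in> uf_vertices W X"
  by (auto simp: uf_arrows_def uf_vertices_def)



fun tri :: "nat \<Rightarrow> nat" where "tri 0 = 0" | "tri (Suc a) = tri a + a"

definition P :: "nat list \<Rightarrow> nat" where "P u = tri (fst (key u)) + snd (key u)"
definition G :: "nat list \<Rightarrow> nat" where "G u = (fst (key u) - 1)^2 + 2 * snd (key u) - 2"

lemma tri_mono: "a \<le> b \<Longrightarrow> tri a \<le> tri b"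
  by (induction b) (auto simp: le_Suc_eq)

lemma tri_N: "tri (Suc n) = n * (n + 1) div 2"
proof -
  have "2 * tri (Suc n) = n * (n + 1)" by (induction n) auto
  then show ?thesis by simp
qed

lemma isV_bounds: "isV n u \<Longrightarrow> 1 \<le> snd (key u) \<and> snd (key u) \<le> fst (key u) \<and> fst (key u) \<le> n"
  by (induction n u rule: isV.induct) auto

lemma isV_ne: "isV n u \<Longrightarrow> u \<noteq> []" by auto

lemma Pnum:
  fixes a b a' b' :: nat
  assumes "1 \<le> b'" "b' \<le> a'" "1 \<le> b" "b \<le> a" "a' < a \<or> (a' = a \<and> b' < b)"
  shows "tri a' + b' < tri a + b \<and> (tri a' + b' + 1 = tri a + b \<longrightarrow> (a' = a \<and> b' + 1 = b) \<or> (a' + 1 = a \<and> b' = a' \<and> b = 1))"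
proof (cases "a' = a")
  case True then show ?thesis using assms by auto
next
  case False
  then have lt: "a' < a" using assms by auto
  show ?thesis
  proof (cases "a = Suc a'")
    case True then show ?thesis using assms by auto
  next
    case False
    then have "Suc (Suc a') \<le> a" using lt by auto
    then have "tri (Suc (Suc a')) \<le> tri a" by (rule tri_mono)
    then show ?thesis using assms by auto
  qed
qed

lemma P_lemma:
  assumes "isV n u" "isV n v" "lexl (key v) (key u)"
  shows "P v < P u \<and> (P v + 1 = P u \<longrightarrow> tight (key v) (key u))"
  using Pnum[of "snd (key v)" "fst (key v)" "snd (key u)" "fst (key u)"]
    isV_bounds[OF assms(1)] isV_bounds[OF assms(2)] assms(3)
  by (auto simp: P_def lexl_def tight_def)

lemma sq_step: "1 \<le> (a::nat) \<Longrightarrow> a^2 = (a - 1)^2 + 2 * a - 1"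
  by (cases a) (auto simp: power2_eq_square)

lemma Gnum:
  fixes a b a' b' l :: nat
  assumes "1 \<le> b'" "1 \<le> a'" "1 \<le> b"
    "(a' = a \<and> 2 * b' + l \<le> 2 * b) \<or> (a' < a \<and> 2 * b' + l + 1 \<le> 2 * a' + 2 * b)"
  shows "(a' - 1)^2 + 2 * b' - 2 + l \<le> (a - 1)^2 + 2 * b - 2"
proof (cases "a' = a")
  case True then show ?thesis using assms by auto
next
  case False
  then have lt: "a' < a" "2 * b' + l + 1 \<le> 2 * a' + 2 * b" using assms by auto
  have "a'^2 \<le> (a - 1)^2" using lt by (intro power_mono) auto
  moreover have "a'^2 = (a' - 1)^2 + 2 * a' - 1" using assms by (intro sq_step)
  ultimately show ?thesis using lt assms by linarith
qed

lemma G_lemma: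
  assumes "isV n u" "isV n v" "degc u v"
  shows "G v + length v \<le> G u"
  using Gnum[of "snd (key v)" "fst (key v)" "snd (key u)" "fst (key u)" "length v"]
    isV_bounds[OF assms(1)] isV_bounds[OF assms(2)] assms(3)
  by (auto simp: G_def degc_def)

lemma P_pos: "isV n u \<Longrightarrow> 1 \<le> P u"
  using isV_bounds[of n u] by (auto simp: P_def)

abbreviation "AR n \<equiv> uf_arrows (chineseW n) (alphabet n)"

lemma arrowPG:
  assumes "(u,v) \<in> AR n" "u \<noteq> []"
  shows "isV n u \<and> isV n v \<and> P v < P u \<and> G v + length v \<le> G u \<and> (P v + 1 = P u \<longrightarrow> v = nxt u)"
  using arrow_from_nonempty[OF assms] P_lemma G_lemma by blast

lemma chain_facts:
  assumes "vs \<in> chains (chineseW n) (alphabet n) i"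
  shows "length vs = i + 1" "\<exists>a. vs ! 0 = [a] \<and> 1 \<le> a \<and> a \<le> n"
    "\<And>k. k < i \<Longrightarrow> (vs ! k, vs ! Suc k) \<in> AR n" "\<And>k. k \<le> i \<Longrightarrow> vs ! k \<noteq> []"
  using assms arrow_from_empty[of "vs ! 0" "chineseW n" n]
  by (auto simp: chains_def)

lemma chain_isV:
  assumes "vs \<in> chains (chineseW n) (alphabet n) i" "k \<le> i"
  shows "isV n (vs ! k)"
proof (cases k)
  case 0 then show ?thesis using chain_facts(2)[OF assms(1)] by auto
next
  case (Suc k')
  then show ?thesis using chain_facts(3,4)[OF assms(1), of k'] assms(2) arrowPG by auto
qed

lemma chainP:
  assumes "vs \<in> chains (chineseW n) (alphabet n) i" "k \<le> j" "j \<le> i"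
  shows "P (vs ! j) + (j - k) \<le> P (vs ! k)"
  using assms(2,3)
proof (induction j)
  case 0 then show ?case by auto
next
  case (Suc j)
  show ?case
  proof (cases "k = Suc j")
    case True then show ?thesis by auto
  next
    case False
    then have "k \<le> j" using Suc by auto
    moreover have "P (vs ! Suc j) < P (vs ! j)"
      using chain_facts(3,4)[OF assms(1), of j] Suc.prems arrowPG by auto
    ultimately show ?thesis using Suc by auto
  qed
qed

lemma chainG:
  assumes "vs \<in> chains (chineseW n) (alphabet n) i" "k \<le> i"
  shows "(\<Sum>j\<in>{1..k}. length (vs ! j)) + G (vs ! k) \<le> G (vs ! 0)"
  using assms(2)
proof (induction k)
  case 0 then show ?case by auto
next
  case (Suc k)
  have "G (vs ! Suc k) + length (vs ! Suc k) \<le> G (vs ! k)"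
    using chain_facts(3,4)[OF assms(1), of k] Suc.prems arrowPG by auto
  then show ?case using Suc by simp
qed

lemma deg_split: "length vs = Suc i \<Longrightarrow> chain_degree vs = length (vs ! 0) + (\<Sum>j\<in>{1..i}. length (vs ! j))"
proof -
  assume l: "length vs = Suc i"
  have "chain_degree vs = sum_list (map length vs)" by (simp add: chain_degree_def length_concat)
  also have "\<dots> = (\<Sum>j\<in>{0..<Suc i}. length (vs ! j))" using l by (simp add: sum_list_sum_nth)
  also have "{0..<Suc i} = insert 0 {1..i}" by auto
  also have "(\<Sum>j\<in>insert 0 {1..i}. length (vs ! j)) = length (vs ! 0) + (\<Sum>j\<in>{1..i}. length (vs ! j))"
    by (subst sum.insert) auto
  finally show ?thesis .
qed

lemma G_letter: "1 \<le> a \<Longrightarrow> 1 + G [a] = a^2"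
  using sq_step[of a] by (simp add: G_def)

lemma deg_bound:
  assumes "vs \<in> chains (chineseW n) (alphabet n) i"
  shows "chain_degree vs \<le> n^2"
proof -
  obtain a where a: "vs ! 0 = [a]" "1 \<le> a" "a \<le> n" using chain_facts(2)[OF assms] by blast
  have "chain_degree vs = 1 + (\<Sum>j\<in>{1..i}. length (vs ! j))"
    using deg_split[of vs i] chain_facts(1)[OF assms] a by simp
  also have "\<dots> \<le> 1 + G [a]" using chainG[OF assms, of i] a by simp
  also have "\<dots> = a^2" using G_letter a by simp
  also have "\<dots> \<le> n^2" using a by (simp add: power_mono)
  finally show ?thesis .
qed

lemma chain_len:
  assumes "vs \<in> chains (chineseW n) (alphabet n) i"
  shows "i + 1 \<le> tri (Suc n)"
proof -
  obtain a where a: "vs ! 0 = [a]" "1 \<le> a" "a \<le> n" using chain_facts(2)[OF assms] by blast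
  have "P (vs ! i) + i \<le> P (vs ! 0)" using chainP[OF assms, of 0 i] by simp
  moreover have "1 \<le> P (vs ! i)" using chain_isV[OF assms, of i] P_pos by auto
  moreover have "P (vs ! 0) = tri (Suc a)" using a by (simp add: P_def)
  moreover have "tri (Suc a) \<le> tri (Suc n)" using a by (intro tri_mono) auto
  ultimately show ?thesis by linarith
qed



definition pathV :: "nat \<Rightarrow> nat list \<Rightarrow> bool" where
  "pathV n u \<longleftrightarrow> (\<exists>a. u = [a] \<and> 1 \<le> a \<and> a \<le> n) \<or> (\<exists>a b. u = [a,b] \<and> 1 \<le> b \<and> b < a \<and> a \<le> n)"

lemma tri2: "tri 2 = 1" by (simp add: numeral_2_eq_2)

lemma pathV_ne: "pathV n u \<Longrightarrow> u \<noteq> []" by (auto simp: pathV_def)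

lemma pathV_vert: assumes "pathV n u" shows "u \<in> uf_vertices (chineseW n) (alphabet n)"
  using assms unfolding pathV_def
proof (elim disjE exE conjE)
  fix a assume "u = [a]" "1 \<le> a" "a \<le> n"
  then show ?thesis by (auto simp: uf_vertices_def alphabet_def)
next
  fix a b assume h: "u = [a,b]" "1 \<le> b" "b < a" "a \<le> n"
  then have "[a,a,b] \<in> chineseW n" by (simp add: inW_iff)
  moreover have "strict_suffix [a,b] [a,a,b]" by (simp add: ssuf_Cons)
  ultimately show ?thesis using h by (auto simp: uf_vertices_def)
qed

lemma arrow_intro:
  assumes "u \<in> uf_vertices (chineseW n) (alphabet n)" "v \<in> uf_vertices (chineseW n) (alphabet n)"
    "u \<noteq> []" "v \<noteq> []" "cfr n (u@v)" "\<not> cfr n (butlast (u@v))"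
  shows "(u,v) \<in> AR n"
  using assms minpre[of "u@v" "chineseW n"] by (auto simp: uf_arrows_def cf_iff)

lemma nxt_path:
  assumes "pathV n u" "2 \<le> P u"
  shows "pathV n (nxt u) \<and> P (nxt u) + 1 = P u \<and> G (nxt u) + length (nxt u) = G u \<and> (u, nxt u) \<in> AR n"
proof -
  from assms(1) consider (s) a where "u = [a]" "1 \<le> a" "a \<le> n"
    | (p) a b where "u = [a,b]" "1 \<le> b" "b < a" "a \<le> n" unfolding pathV_def by blast
  then show ?thesis
  proof cases
  case (s a)
  note h = s
  then obtain c where c: "a = Suc (Suc c)" using assms(2) by (cases a; cases "a - 1") (auto simp: P_def)
  have nx: "nxt u = [a, a - 1]" using h by (simp add: nxt_def)
  have pv: "pathV n (nxt u)" using nx h c by (simp add: pathV_def)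
  moreover have "P (nxt u) + 1 = P u" using nx h c by (simp add: P_def)
  moreover have "G (nxt u) + length (nxt u) = G u" using nx h c by (simp add: G_def)
  moreover have "(u, nxt u) \<in> AR n"
    using nx h c pathV_vert[OF pv] pathV_vert[OF assms(1)] by (intro arrow_intro) auto
  ultimately show ?thesis by blast
next
  case (p a b)
  note h = p
  show ?thesis
  proof (cases "b = 1")
    case True
    then obtain c where c: "a = Suc (Suc c)" using h by (cases a; cases "a - 1") auto
    have nx: "nxt u = [a - 1]" using h True by (simp add: nxt_def)
    have pv: "pathV n (nxt u)" using nx h c by (simp add: pathV_def)
    moreover have "P (nxt u) + 1 = P u" using nx h c True by (simp add: P_def)
    moreover have "G (nxt u) + length (nxt u) = G u" using nx h c True by (simp add: G_def power2_eq_square)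
    moreover have "cfr n (u @ nxt u)" using nx h c True by (cases c) auto
    moreover have "(u, nxt u) \<in> AR n"
      using nx h c True pathV_vert[OF pv] pathV_vert[OF assms(1)] \<open>cfr n (u @ nxt u)\<close> by (intro arrow_intro) auto
    ultimately show ?thesis by blast
  next
    case False
    have nx: "nxt u = [a, b - 1]" using h False by (simp add: nxt_def)
    obtain c where c: "b = Suc (Suc c)" using h False by (cases b; cases "b - 1") auto
    have nx2: "nxt u = [a, Suc c]" using nx c by simp
    have pv: "pathV n (nxt u)" using nx2 h c unfolding pathV_def by auto
    moreover have "P (nxt u) + 1 = P u" using nx2 h c by (simp add: P_def)
    moreover have "G (nxt u) + length (nxt u) = G u" using nx2 h c by (simp add: G_def)
    moreover have "(u, nxt u) \<in> AR n"
      using nx2 h c pathV_vert[OF pv] pathV_vert[OF assms(1)] by (intro arrow_intro) auto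
    ultimately show ?thesis by blast
  qed
qed
qed

lemma pathV_isV: "pathV n u \<Longrightarrow> isV n u"
  by (auto simp: pathV_def)

lemma path_seq:
  assumes "k < tri (Suc n)" "1 \<le> n"
  shows "pathV n ((nxt ^^ k) [n]) \<and> P ((nxt ^^ k) [n]) + k = tri (Suc n)
     \<and> (\<Sum>j\<in>{1..k}. length ((nxt ^^ j) [n])) + G ((nxt ^^ k) [n]) = G [n]
     \<and> (Suc k < tri (Suc n) \<longrightarrow> ((nxt ^^ k) [n], (nxt ^^ Suc k) [n]) \<in> AR n)"
  using assms(1)
proof (induction k)
  case 0
  have "pathV n [n]" using assms by (simp add: pathV_def)
  moreover have "P [n] = tri (Suc n)" by (simp add: P_def)
  moreover have "1 < tri (Suc n) \<Longrightarrow> 2 \<le> P [n]" using calculation by simp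
  ultimately show ?case using nxt_path[of n "[n]"] by auto
next
  case (Suc k)
  let ?u = "(nxt ^^ k) [n]"
  have IH: "pathV n ?u" "P ?u + k = tri (Suc n)" 
     "(\<Sum>j\<in>{1..k}. length ((nxt ^^ j) [n])) + G ?u = G [n]"
    using Suc by auto
  have "2 \<le> P ?u" using IH Suc.prems by auto
  note nx = nxt_path[OF IH(1) this]
  have pv: "pathV n ((nxt ^^ Suc k) [n])" using nx by simp
  moreover have pp: "P ((nxt ^^ Suc k) [n]) + Suc k = tri (Suc n)" using nx IH by simp
  moreover have "(\<Sum>j\<in>{1..Suc k}. length ((nxt ^^ j) [n])) + G ((nxt ^^ Suc k) [n]) = G [n]"
    using nx IH by simp
  moreover have "Suc (Suc k) < tri (Suc n) \<longrightarrow> ((nxt ^^ Suc k) [n], (nxt ^^ Suc (Suc k)) [n]) \<in> AR n"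
  proof
    assume "Suc (Suc k) < tri (Suc n)"
    then have "2 \<le> P ((nxt ^^ Suc k) [n])" using pp by simp
    then show "((nxt ^^ Suc k) [n], (nxt ^^ Suc (Suc k)) [n]) \<in> AR n"
      using nxt_path[OF pv] by simp
  qed
  ultimately show ?case by blast
qed

lemma tri_pos: "1 \<le> n \<Longrightarrow> 1 \<le> tri (Suc n)"
  using tri_mono[of 2 "Suc n"] by simp

lemma tri_strict: "a < b \<Longrightarrow> tri (Suc a) < tri (Suc b)"
  using tri_mono[of "Suc (Suc a)" "Suc b"] by simp

definition cm :: "nat \<Rightarrow> nat list list" where
  "cm n = map (\<lambda>k. (nxt ^^ k) [n]) [0..<tri (Suc n)]"

lemma cm_nth: "k < tri (Suc n) \<Longrightarrow> cm n ! k = (nxt ^^ k) [n]"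
  unfolding cm_def by (simp del: tri.simps)

lemma cm_len: "length (cm n) = tri (Suc n)"
  unfolding cm_def by (simp del: tri.simps)

lemma cm_chain: assumes "1 \<le> n"
  shows "cm n \<in> chains (chineseW n) (alphabet n) (tri (Suc n) - 1)"
proof -
  have T: "1 \<le> tri (Suc n)" using tri_pos assms .
  have "([], [n]) \<in> AR n" using assms by (auto simp: uf_arrows_def alphabet_def)
  moreover have "\<forall>k<tri (Suc n). (nxt ^^ k) [n] \<noteq> []" using path_seq[OF _ assms] pathV_ne by blast
  then have "\<forall>v\<in>set (cm n). v \<noteq> []" by (auto simp: cm_def)
  moreover have "\<forall>k<tri (Suc n) - 1. (cm n ! k, cm n ! Suc k) \<in> AR n"
    using path_seq[OF _ assms] by (auto simp: cm_nth simp del: tri.simps)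
  moreover have "cm n ! 0 = [n]" using T by (simp add: cm_nth del: tri.simps)
  ultimately show ?thesis using T by (auto simp: chains_def cm_len simp del: tri.simps)
qed

lemma chain_unique:
  assumes "1 \<le> n" "vs \<in> chains (chineseW n) (alphabet n) (tri (Suc n) - 1)"
  shows "vs = cm n"
proof -
  let ?N = "tri (Suc n)"
  have T: "1 \<le> ?N" using tri_pos assms(1) .
  have len: "length vs = ?N" using chain_facts(1)[OF assms(2)] T by simp
  have lowP: "?N - k \<le> P (vs ! k)" if "k < ?N" for k
  proof -
    have "P (vs ! (?N - 1)) + (?N - 1 - k) \<le> P (vs ! k)" using chainP[OF assms(2), of k "?N - 1"] that by simp
    moreover have "1 \<le> P (vs ! (?N - 1))" using chain_isV[OF assms(2), of "?N - 1"] P_pos by auto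
    ultimately show ?thesis using that by linarith
  qed
  have eq: "vs ! k = (nxt ^^ k) [n]" if "k < ?N" for k
    using that
  proof (induction k)
    case 0
    obtain a where a: "vs ! 0 = [a]" "1 \<le> a" "a \<le> n" using chain_facts(2)[OF assms(2)] by blast
    have "?N \<le> tri (Suc a)" using lowP[of 0] a T by (simp add: P_def)
    then have "a = n" using a tri_strict[of a n] by (cases "a < n") auto
    then show ?case using a by simp
  next
    case (Suc k)
    have ih: "vs ! k = (nxt ^^ k) [n]" using Suc by simp
    have arr: "(vs ! k, vs ! Suc k) \<in> AR n" using chain_facts(3,4)[OF assms(2), of k] Suc.prems by simp
    have "P ((nxt ^^ k) [n]) + k = ?N" using path_seq[OF _ assms(1), of k] Suc.prems by simp
    moreover have "?N - Suc k \<le> P (vs ! Suc k)" using lowP Suc.prems by blast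
    moreover have "P (vs ! Suc k) < P (vs ! k)" using arrowPG[OF arr] chain_facts(4)[OF assms(2), of k] Suc.prems by auto
    ultimately have "P (vs ! Suc k) + 1 = P (vs ! k)" using ih by simp
    then have "vs ! Suc k = nxt (vs ! k)" using arrowPG[OF arr] chain_facts(4)[OF assms(2), of k] Suc.prems by auto
    then show ?case using ih by simp
  qed
  show ?thesis using len eq by (intro nth_equalityI) (auto simp: cm_nth cm_len simp del: tri.simps)
qed

lemma cm_degree: assumes "1 \<le> n" shows "chain_degree (cm n) = n^2"
proof -
  let ?N = "tri (Suc n)"
  have T: "1 \<le> ?N" using tri_pos assms(1) .
  have ps: "pathV n ((nxt ^^ (?N - 1)) [n]) \<and> P ((nxt ^^ (?N - 1)) [n]) + (?N - 1) = ?N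
     \<and> (\<Sum>j\<in>{1..?N - 1}. length ((nxt ^^ j) [n])) + G ((nxt ^^ (?N - 1)) [n]) = G [n]"
    using path_seq[OF _ assms, of "?N - 1"] T by simp
  have last: "G ((nxt ^^ (?N - 1)) [n]) = 0"
  proof -
    have pv: "pathV n ((nxt ^^ (?N - 1)) [n])" and p1: "P ((nxt ^^ (?N - 1)) [n]) = 1" using ps T by auto
    from pv show ?thesis unfolding pathV_def
    proof (elim disjE exE conjE)
      fix a assume h: "(nxt ^^ (?N - 1)) [n] = [a]" "1 \<le> a" "a \<le> n"
      then have "tri a + a = 1" using p1 by (simp add: P_def)
      then have "a = 1" using h(2) by (cases a; cases "a - 1") auto
      then show ?thesis using h by (simp add: G_def)
    next
      fix a b assume h: "(nxt ^^ (?N - 1)) [n] = [a,b]" "1 \<le> b" "b < a" "a \<le> n"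
      have "tri 2 \<le> tri a" using h by (intro tri_mono) auto
      then have "2 \<le> P [a,b]" using h by (simp add: P_def tri2)
      then show ?thesis using p1 h by simp
    qed
  qed
  have "chain_degree (cm n) = length (cm n ! 0) + (\<Sum>j\<in>{1..?N - 1}. length (cm n ! j))"
    using deg_split[of "cm n" "?N - 1"] T by (simp add: cm_len del: tri.simps)
  also have "(\<Sum>j\<in>{1..?N - 1}. length (cm n ! j)) = (\<Sum>j\<in>{1..?N - 1}. length ((nxt ^^ j) [n]))"
    using T by (intro sum.cong) (auto simp: cm_nth simp del: tri.simps)
  also have "length (cm n ! 0) = 1" using T by (simp add: cm_nth del: tri.simps)
  finally have "chain_degree (cm n) = 1 + G [n]" using ps last by simp
  then show ?thesis using G_letter assms by simp
qed



lemma isV_set: "isV n u \<Longrightarrow> set u \<subseteq> {..n} \<and> length u \<le> 3"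
  by (induction n u rule: isV.induct) auto

lemma verts_sub: "uf_vertices (chineseW n) (alphabet n) \<subseteq> {xs. set xs \<subseteq> {..n} \<and> length xs \<le> 3}"
proof
  fix u assume u: "u \<in> uf_vertices (chineseW n) (alphabet n)"
  show "u \<in> {xs. set xs \<subseteq> {..n} \<and> length xs \<le> 3}"
  proof (cases "u = []")
    case True then show ?thesis by simp
  next
    case False then show ?thesis using vert_isV[OF u] isV_set by blast
  qed
qed

lemma verts_fin: "finite (uf_vertices (chineseW n) (alphabet n))"
  by (rule finite_subset[OF verts_sub]) (rule finite_lists_length_le, simp)

lemma arrows_fin: "finite (AR n)"
proof -
  have "AR n \<subseteq> uf_vertices (chineseW n) (alphabet n) \<times> uf_vertices (chineseW n) (alphabet n)"
    using arrow_source arrow_target by fast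
  then show ?thesis using verts_fin by (meson finite_SigmaI finite_subset)
qed

lemma arrows_acyc: "acyclic (AR n)"
proof -
  define mu where "mu u = (if u = [] then Suc (tri (Suc n)) else P u)" for u
  have "(AR n)\<inverse> \<subseteq> measure mu"
  proof
    fix x assume "x \<in> (AR n)\<inverse>"
    then obtain v u where x: "x = (v,u)" "(u,v) \<in> AR n" by auto
    show "x \<in> measure mu"
    proof (cases "u = []")
      case True
      then obtain a where a: "v = [a]" "1 \<le> a" "a \<le> n" using arrow_from_empty x(2) by blast
      have "tri (Suc a) \<le> tri (Suc n)" using a by (intro tri_mono) auto
      then show ?thesis using x True a by (simp add: mu_def P_def)
    next
      case False
      then show ?thesis using arrowPG[OF x(2) False] isV_ne x by (auto simp: mu_def)
    qed
  qed
  then have "acyclic ((AR n)\<inverse>)" by (meson wf_acyclic wf_measure wf_subset)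
  then show ?thesis by simp
qed

lemma chains_fin: "finite (chains (chineseW n) (alphabet n) i)"
proof -
  let ?V = "uf_vertices (chineseW n) (alphabet n)"
  have "chains (chineseW n) (alphabet n) i \<subseteq> {xs. set xs \<subseteq> ?V \<and> length xs \<le> i + 1}"
  proof
    fix vs assume vs: "vs \<in> chains (chineseW n) (alphabet n) i"
    have "vs ! k \<in> ?V" if "k < length vs" for k
    proof (cases k)
      case 0 then show ?thesis using vs arrow_target by (auto simp: chains_def)
    next
      case (Suc k')
      then show ?thesis using vs arrow_target that by (auto simp: chains_def)
    qed
    then have "set vs \<subseteq> ?V" by (auto simp: in_set_conv_nth)
    then show "vs \<in> {xs. set xs \<subseteq> ?V \<and> length xs \<le> i + 1}" using vs by (auto simp: chains_def)
  qed
  then show ?thesis using finite_lists_length_le[OF verts_fin] by (rule finite_subset)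
qed

theorem lemma6p3:
  fixes n :: nat
  assumes "n \<ge> 1"
  defines "W \<equiv> chineseW n" and "X \<equiv> alphabet n" and "N \<equiv> n * (n + 1) div 2"
  shows "(card (chains W X (N - 1)) = 1
         \<and> (\<forall>c\<in>chains W X (N - 1). \<forall>i. \<forall>c'\<in>chains W X i.
               chain_degree c' \<le> chain_degree c))
    \<and> (\<forall>m\<ge>N. chains W X m = {})
    \<and> (finite (uf_vertices W X) \<and> finite (uf_arrows W X) \<and> acyclic (uf_arrows W X))
    \<and> (\<forall>i. finite (chains W X i))"
proof -
  have NN: "N = tri (Suc n)" unfolding N_def by (simp only: tri_N)
  have eq: "chains W X (N - 1) = {cm n}"
    using cm_chain[OF assms(1)] chain_unique[OF assms(1)] unfolding W_def X_def NN by blast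
  have a2: "\<forall>c\<in>chains W X (N - 1). \<forall>i. \<forall>c'\<in>chains W X i. chain_degree c' \<le> chain_degree c"
    using eq cm_degree[OF assms(1)] deg_bound unfolding W_def X_def by auto
  have b: "\<forall>m\<ge>N. chains W X m = {}"
    using chain_len unfolding W_def X_def NN by fastforce
  show ?thesis using eq a2 b verts_fin arrows_fin arrows_acyc chains_fin unfolding W_def X_def
    by simp
qed


end
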